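(* Assume Case 2 holds, $d=0$ and $\delta<T_{s-1}$. Then for every $n\ge1$, $Q^n$ contains the term $z^{\gamma_n}$ (where $\gamma_n=\gamma\delta^{n-1}$), and $w_l(Q^n)=\gamma_n$ for every $l\in[l_1,\alpha]$. Moreover, for every $n\ge2$, either $N(Q^n)=\{(x,y):x\ge\gamma_n,y\ge0\}$, or the edge of $N(Q^n)$ whose right endpoint is the vertex $(\gamma_n,0)$ has slope strictly less than $-l_1^{-1}$ (i.e. it is strictly steeper than the edge of $N(q)$ ending at $(\gamma,0)$).
   Context: Let $f(z,w)=(p(z),q(z,w))$ be a holomorphic skew product germ at the origin of $\mathbb{C}^2$ with $f(0,0)=(0,0)$, where $p(z)=a_\delta z^\delta+O(z^{\delta+1})$ with $a_\delta\neq0$ and integer $\delta\ge1$, and $q(z,w)=\sum_{i+j\ge1}b_{ij}z^iw^j$ is not identically zero. For $n\ge1$ write $f^n=(p^n,Q^n)$. For a nonzero germ $g=\sum g_{ij}z^iw^j$, say $g$ contains $z^aw^b$ if $g_{ab}\ne0$, and for real $l>0$ let $w_l(g)=\min\{i+lj: g_{ij}\neq0\}$. The Newton polygon $N(g)$ is the convex hull of $\bigcup_{g_{ij}\neq0}\{(x,y):x\ge i,\ y\ge j\}$. Let $(n_1,m_1),\dots,(n_s,m_s)$ be the vertices of $N(q)$ with $n_1<\cdots<n_s$, $m_1>\cdots>m_s$; for $1\le k\le s-1$ let $T_k$ be the $y$-intercept of the line through $(n_k,m_k)$ and $(n_{k+1},m_{k+1})$. Case 2 means: $s>1$ and $\delta\le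 T_{s-1}$; set $(\gamma,d)=(n_s,m_s)$ and $l_1=\frac{n_s-n_{s-1}}{m_{s-1}-m_s}$. Let $\alpha=\gamma/(\delta-d)$. *)

theory Defs
  imports "HOL-Analysis.Analysis"
begin

text \<open>A one-variable series is  nat => complex  (coefficient of z^i);
  a two-variable series is  nat => nat => complex  (coefficient g i j of z^i w^j).\<close>

type_synonym ser1 = "nat \<Rightarrow> complex"
type_synonym ser2 = "nat \<Rightarrow> nat \<Rightarrow> complex"

text \<open>Convergence near the origin (holomorphic germ) via Cauchy-type coefficient bounds.\<close>
definition convergent1 :: "ser1 \<Rightarrow> bool" where
  "convergent1 g \<longleftrightarrow> (\<exists>C r::real. \<forall>i. norm (g i) \<le> C * r ^ i)"

definition convergent2 :: "ser2 \<Rightarrow> bool" where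
  "convergent2 g \<longleftrightarrow> (\<exists>C r::real. \<forall>i j. norm (g i j) \<le> C * r ^ (i + j))"

definition mul1 :: "ser1 \<Rightarrow> ser1 \<Rightarrow> ser1" where
  "mul1 f g = (\<lambda>a. \<Sum>i\<le>a. f i * g (a - i))"

fun pow1 :: "ser1 \<Rightarrow> nat \<Rightarrow> ser1" where
  "pow1 f 0 = (\<lambda>a. if a = 0 then 1 else 0)"
| "pow1 f (Suc n) = mul1 f (pow1 f n)"

definition mul2 :: "ser2 \<Rightarrow> ser2 \<Rightarrow> ser2" where
  "mul2 f g = (\<lambda>a b. \<Sum>i\<le>a. \<Sum>j\<le>b. f i j * g (a - i) (b - j))"

fun pow2 :: "ser2 \<Rightarrow> nat \<Rightarrow> ser2" where
  "pow2 f 0 = (\<lambda>a b. if a = 0 \<and> b = 0 then 1 else 0)"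
| "pow2 f (Suc n) = mul2 f (pow2 f n)"

definition lift :: "ser1 \<Rightarrow> ser2" where
  "lift P = (\<lambda>a b. if b = 0 then P a else 0)"

text \<open>Formal composition g(P(z)), valid when P(0) = 0 (then only i \<le> a contributes).\<close>
definition comp1 :: "ser1 \<Rightarrow> ser1 \<Rightarrow> ser1" where
  "comp1 g P = (\<lambda>a. \<Sum>i\<le>a. g i * pow1 P i a)"

text \<open>Formal composition g(P(z), R(z,w)), valid when P(0) = 0 and R(0,0) = 0
  (then only terms with i + j \<le> a + b contribute to the coefficient of z^a w^b).\<close>
definition comp2 :: "ser2 \<Rightarrow> ser1 \<Rightarrow> ser2 \<Rightarrow> ser2" where
  "comp2 g P R = (\<lambda>a b. \<Sum>i\<le>a + b. \<Sum>j\<le>a + b - i.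
       g i j * mul2 (pow2 (lift P) i) (pow2 R j) a b)"

text \<open>Iterates f^n = (p^n, Q^n) of the skew product f = (p, q);
  f^0 = identity, f^(n+1) = f o f^n.\<close>
fun piter :: "ser1 \<Rightarrow> nat \<Rightarrow> ser1" where
  "piter p 0 = (\<lambda>a. if a = 1 then 1 else 0)"
| "piter p (Suc n) = comp1 p (piter p n)"

fun Qiter :: "ser1 \<Rightarrow> ser2 \<Rightarrow> nat \<Rightarrow> ser2" where
  "Qiter p q 0 = (\<lambda>a b. if a = 0 \<and> b = 1 then 1 else 0)"
| "Qiter p q (Suc n) = comp2 q (piter p n) (Qiter p q n)"

definition wl :: "real \<Rightarrow> ser2 \<Rightarrow> real" where
  "wl l g = Inf {real i + l * real j | i j. g i j \<noteq> 0}"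

definition newton :: "ser2 \<Rightarrow> (real \<times> real) set" where
  "newton g = convex hull (\<Union>{ {(x, y). real i \<le> x \<and> real j \<le> y} | i j. g i j \<noteq> 0})"

definition newton_vertices :: "ser2 \<Rightarrow> (real \<times> real) set" where
  "newton_vertices g = {v. v extreme_point_of newton g}"

end

theory Submission
  imports Defs
begin


definition mono2 :: "nat \<Rightarrow> nat \<Rightarrow> ser2" where
  "mono2 i j = (\<lambda>a b. if a = i \<and> b = j then 1 else 0)"

lemma mul2_mono: "mul2 (mono2 i j) (mono2 i' j') = mono2 (i+i') (j+j')"
proof (intro ext)
  fix a b
  define c :: complex where "c = (if a - i = i' \<and> b - j = j' then 1 else 0)"
  have "mul2 (mono2 i j) (mono2 i' j') a b = (\<Sum>x\<le>a. if x = i then (\<Sum>y\<le>b. if y = j then c else 0) else 0)"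
    unfolding mul2_def
  proof (intro sum.cong refl)
    fix x assume "x \<in> {..a}"
    show "(\<Sum>y\<le>b. mono2 i j x y * mono2 i' j' (a - x) (b - y)) = (if x = i then (\<Sum>y\<le>b. if y = j then c else 0) else 0)"
    proof (cases "x = i")
      case True
      have "(\<Sum>y\<le>b. mono2 i j x y * mono2 i' j' (a - x) (b - y)) = (\<Sum>y\<le>b. if y = j then c else 0)"
        by (rule sum.cong) (auto simp: mono2_def c_def True)
      then show ?thesis using True by simp
    next
      case False
      then show ?thesis by (auto simp: mono2_def)
    qed
  qed
  also have "\<dots> = (if i \<le> a \<and> j \<le> b then c else 0)"
    by (simp only: sum.delta finite_atMost) (simp add: sum.delta)
  also have "\<dots> = (if i \<le> a \<and> j \<le> b \<and> a - i = i' \<and> b - j = j' then 1 else 0)"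
    by (simp add: c_def)
  also have "\<dots> = mono2 (i+i') (j+j') a b" unfolding mono2_def by auto
  finally show "mul2 (mono2 i j) (mono2 i' j') a b = mono2 (i+i') (j+j') a b" .
qed

lemma pow2_mono: "pow2 (mono2 i j) n = mono2 (n*i) (n*j)"
proof (induction n)
  case 0
  then show ?case by (auto simp: mono2_def)
next
  case (Suc n)
  then show ?case by (simp add: mul2_mono)
qed

lemma Q1_eq: "Qiter p q (Suc 0) = q"
proof (intro ext)
  fix a b
  have z: "lift (\<lambda>a. if a = Suc 0 then 1 else 0) = mono2 1 0"
    by (auto simp: lift_def mono2_def fun_eq_iff)
  have w: "(\<lambda>a b. if a = 0 \<and> b = Suc 0 then 1 else 0) = mono2 0 1" by (auto simp: mono2_def fun_eq_iff)
  have "Qiter p q (Suc 0) a b = (\<Sum>i\<le>a + b. \<Sum>j\<le>a + b - i. q i j * mono2 i j a b)"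
    by (simp add: comp2_def z w pow2_mono mul2_mono)
  also have "\<dots> = (\<Sum>i\<le>a + b. if i = a then (\<Sum>j\<le>a + b - i. if j = b then q a b else 0) else 0)"
  proof (intro sum.cong refl)
    fix i assume "i \<in> {..a+b}"
    show "(\<Sum>j\<le>a + b - i. q i j * mono2 i j a b) = (if i = a then (\<Sum>j\<le>a + b - i. if j = b then q a b else 0) else 0)"
    proof (cases "i = a")
      case True
      have "(\<Sum>j\<le>a + b - i. q i j * mono2 i j a b) = (\<Sum>j\<le>a + b - i. if j = b then q a b else 0)"
        by (rule sum.cong) (auto simp: mono2_def True)
      then show ?thesis using True by simp
    next
      case False
      then show ?thesis by (auto simp: mono2_def)
    qed
  qed
  also have "\<dots> = q a b" by (simp add: sum.delta)
  finally show "Qiter p q (Suc 0) a b = q a b" .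
qed

lemma pow1_order:
  assumes "\<forall>a<e. P a = 0"
  shows "(\<forall>a<n*e. pow1 P n a = 0) \<and> pow1 P n (n*e) = (P e)^n"
proof (induction n)
  case 0
  then show ?case by simp
next
  case (Suc n)
  have low: "pow1 P (Suc n) a = 0" if "a < Suc n * e" for a
  proof -
    have "pow1 P (Suc n) a = (\<Sum>i\<le>a. P i * pow1 P n (a - i))" by (simp add: mul1_def)
    also have "\<dots> = 0"
    proof (intro sum.neutral ballI)
      fix i assume "i \<in> {..a}"
      show "P i * pow1 P n (a - i) = 0"
      proof (cases "i < e")
        case True then show ?thesis using assms by simp
      next
        case False
        then have "a - i < n * e" using that \<open>i \<in> {..a}\<close> by simp
        then show ?thesis using Suc.IH by simp
      qed
    qed
    finally show ?thesis .
  qed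
  have top: "pow1 P (Suc n) (Suc n * e) = (P e)^(Suc n)"
  proof -
    have "pow1 P (Suc n) (Suc n * e) = (\<Sum>i\<le>Suc n * e. P i * pow1 P n (Suc n * e - i))" by (simp add: mul1_def)
    also have "\<dots> = (\<Sum>i\<le>Suc n * e. if i = e then P e * (P e)^n else 0)"
    proof (intro sum.cong refl)
      fix i assume "i \<in> {..Suc n * e}"
      show "P i * pow1 P n (Suc n * e - i) = (if i = e then P e * (P e)^n else 0)"
      proof (cases "i < e")
        case True then show ?thesis using assms by simp
      next
        case False
        show ?thesis
        proof (cases "i = e")
          case True then show ?thesis using Suc.IH by simp
        next
          case False
          then have "Suc n * e - i < n * e" using \<open>\<not> i < e\<close> \<open>i \<in> {..Suc n * e}\<close> by auto
          then show ?thesis using Suc.IH False by simp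
        qed
      qed
    qed
    also have "\<dots> = (P e)^(Suc n)" by (simp add: sum.delta)
    finally show ?thesis .
  qed
  show ?case using low top by blast
qed

lemma comp1_order:
  assumes "\<forall>a<d. p a = 0" "p d \<noteq> 0" "\<forall>a<e. P a = 0" "P e \<noteq> 0" "e \<ge> 1"
  shows "(\<forall>a<d*e. comp1 p P a = 0) \<and> comp1 p P (d*e) \<noteq> 0"
proof -
  note po = pow1_order[OF assms(3)]
  have low: "comp1 p P a = 0" if "a < d*e" for a
    unfolding comp1_def
  proof (intro sum.neutral ballI)
    fix i assume "i \<in> {..a}"
    show "p i * pow1 P i a = 0"
    proof (cases "i < d")
      case True then show ?thesis using assms by simp
    next
      case False
      then have "d * e \<le> i * e" by simp
      then have "a < i * e" using that by linarith
      then show ?thesis using po[of i] by simp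
    qed
  qed
  have "comp1 p P (d*e) = (\<Sum>i\<le>d*e. if i = d then p d * (P e)^d else 0)"
    unfolding comp1_def
  proof (intro sum.cong refl)
    fix i assume "i \<in> {..d*e}"
    show "p i * pow1 P i (d*e) = (if i = d then p d * (P e)^d else 0)"
    proof (cases "i < d")
      case True then show ?thesis using assms by simp
    next
      case False
      show ?thesis
      proof (cases "i = d")
        case True then show ?thesis using po[of d] by simp
      next
        case False
        then have "d < i" using \<open>\<not> i < d\<close> by simp
        then have "d * e < i * e" using assms(5) by simp
        then show ?thesis using po[of i] False by simp
      qed
    qed
  qed
  also have "\<dots> = p d * (P e)^d" using assms(5) by (simp add: sum.delta)
  finally show ?thesis using low assms by simp
qed

lemma piter_order:
  assumes "\<forall>a<d. p a = 0" "p d \<noteq> 0" "d \<ge> 1"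
  shows "(\<forall>a<d^k. piter p k a = 0) \<and> piter p k (d^k) \<noteq> 0"
proof (induction k)
  case 0
  then show ?case by simp
next
  case (Suc k)
  have "d^k \<ge> 1" using assms(3) by simp
  then show ?case using comp1_order[OF assms(1,2), where P="piter p k" and e="d^k"] Suc by simp
qed


lemma W_mul:
  fixes u v A B :: real
  assumes "\<forall>x y. f x y \<noteq> 0 \<longrightarrow> A \<le> u * real x + v * real y"
    and "\<forall>x y. g x y \<noteq> 0 \<longrightarrow> B \<le> u * real x + v * real y"
    and "mul2 f g a b \<noteq> 0"
  shows "A + B \<le> u * real a + v * real b"
proof -
  from assms(3) obtain i where i: "i \<le> a" "(\<Sum>j\<le>b. f i j * g (a - i) (b - j)) \<noteq> 0"
    unfolding mul2_def by (meson atMost_iff sum.not_neutral_contains_not_neutral)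
  from i(2) obtain j where j: "j \<le> b" "f i j * g (a - i) (b - j) \<noteq> 0"
    by (meson atMost_iff sum.not_neutral_contains_not_neutral)
  have "A \<le> u * real i + v * real j" using assms(1) j(2) by auto
  moreover have "B \<le> u * real (a - i) + v * real (b - j)" using assms(2) j(2) by auto
  ultimately show ?thesis using i(1) j(1) by (simp add: of_nat_diff algebra_simps)
qed

lemma pow2_0_supp: "pow2 R 0 x y \<noteq> 0 \<Longrightarrow> x = 0 \<and> y = 0"
  by (auto split: if_splits)

lemma W_pow:
  fixes u v A :: real
  assumes "\<forall>x y. f x y \<noteq> 0 \<longrightarrow> A \<le> u * real x + v * real y"
  shows "pow2 f n a b \<noteq> 0 \<Longrightarrow> real n * A \<le> u * real a + v * real b"
proof (induction n arbitrary: a b)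
  case 0
  then show ?case by (auto split: if_splits)
next
  case (Suc n)
  have "A + real n * A \<le> u * real a + v * real b"
    using W_mul[OF assms, of "pow2 f n" "real n * A" a b] Suc by auto
  then show ?case by (simp add: algebra_simps)
qed

lemma mul2_lift: "mul2 (lift f) (lift g) = lift (mul1 f g)"
proof (intro ext)
  fix a b
  show "mul2 (lift f) (lift g) a b = lift (mul1 f g) a b"
  proof (cases "b = 0")
    case True
    then show ?thesis by (simp add: mul2_def lift_def mul1_def)
  next
    case False
    have "mul2 (lift f) (lift g) a b = 0" unfolding mul2_def
      by (intro sum.neutral ballI) (auto simp: lift_def False)
    then show ?thesis by (simp add: lift_def False)
  qed
qed

lemma pow2_lift: "pow2 (lift P) n = lift (pow1 P n)"
proof (induction n)
  case 0
  then show ?case by (auto simp: lift_def fun_eq_iff)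
next
  case (Suc n)
  then show ?case by (simp add: mul2_lift)
qed

lemma mul2_unit: "mul2 f (pow2 R 0) = f"
proof (intro ext)
  fix a b
  have "mul2 f (pow2 R 0) a b = (\<Sum>i\<le>a. if i = a then (\<Sum>j\<le>b. if j = b then f a b else 0) else 0)"
    unfolding mul2_def
  proof (intro sum.cong refl)
    fix i assume i: "i \<in> {..a}"
    show "(\<Sum>j\<le>b. f i j * pow2 R 0 (a - i) (b - j)) = (if i = a then (\<Sum>j\<le>b. if j = b then f a b else 0) else 0)"
    proof (cases "i = a")
      case True
      have "(\<Sum>j\<le>b. f i j * pow2 R 0 (a - i) (b - j)) = (\<Sum>j\<le>b. if j = b then f a b else 0)"
        by (rule sum.cong) (auto simp: True)
      then show ?thesis using True by simp
    next
      case False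
      then show ?thesis using i by auto
    qed
  qed
  also have "\<dots> = f a b" by simp
  finally show "mul2 f (pow2 R 0) a b = f a b" .
qed

lemma mul2_unit': "mul2 f (\<lambda>a b. if a = 0 \<and> b = 0 then 1 else 0) = f"
  using mul2_unit[of f] by simp

lemma step:
  fixes P :: ser1 and R q :: ser2 and e g \<gamma> \<delta> :: nat and l :: real
  assumes qs: "\<forall>i j. q i j \<noteq> 0 \<longrightarrow> (i, j) \<noteq> (\<gamma>, 0) \<longrightarrow> real \<delta> * real \<gamma> < real \<delta> * real i + real \<gamma> * real j"
    and qg: "q \<gamma> 0 \<noteq> 0"
    and Plow: "\<forall>a<e. P a = 0" and Pe: "P e \<noteq> 0" and e1: "e \<ge> 1" and d1: "\<delta> \<ge> 1"
    and rel: "\<gamma> * e = \<delta> * g"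
    and Rs: "\<forall>a b. R a b \<noteq> 0 \<longrightarrow> real g \<le> real a + l * real b"
  shows "\<forall>a b. comp2 q P R a b \<noteq> 0 \<longrightarrow> real (\<gamma> * e) \<le> real a + l * real b"
    and "\<forall>a b. comp2 q P R a b \<noteq> 0 \<longrightarrow> b \<ge> 1 \<longrightarrow> real (\<gamma> * e) < real a + l * real b"
    and "comp2 q P R (\<gamma> * e) 0 \<noteq> 0"
proof -
  have liftS: "\<forall>x y. lift P x y \<noteq> 0 \<longrightarrow> real e \<le> 1 * real x + l * real y"
  proof (intro allI impI)
    fix x y assume "lift P x y \<noteq> 0"
    then have "y = 0" "P x \<noteq> 0" by (auto simp: lift_def split: if_splits)
    then have "e \<le> x" using Plow not_less by blast
    then show "real e \<le> 1 * real x + l * real y" using \<open>y = 0\<close> by simp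
  qed
  have RS': "\<forall>x y. R x y \<noteq> 0 \<longrightarrow> real g \<le> 1 * real x + l * real y" using Rs by simp
  have key: "real i * real e + real j * real g \<le> real a + l * real b"
    if "mul2 (pow2 (lift P) i) (pow2 R j) a b \<noteq> 0" for i j a b
  proof -
    have A: "\<forall>x y. pow2 (lift P) i x y \<noteq> 0 \<longrightarrow> real i * real e \<le> 1 * real x + l * real y"
      using W_pow[OF liftS] by blast
    have B: "\<forall>x y. pow2 R j x y \<noteq> 0 \<longrightarrow> real j * real g \<le> 1 * real x + l * real y"
      using W_pow[OF RS'] by blast
    show ?thesis using W_mul[OF A B that] by simp
  qed
  have ineq: "real (\<gamma> * e) < real i * real e + real j * real g"
    if "q i j \<noteq> 0" "(i, j) \<noteq> (\<gamma>, 0)" for i j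
  proof -
    have h: "real \<delta> * real \<gamma> < real \<delta> * real i + real \<gamma> * real j" using qs that by blast
    have relr: "real \<gamma> * real e = real \<delta> * real g" using rel by (metis of_nat_mult)
    have "real e * (real \<delta> * real \<gamma>) < real e * (real \<delta> * real i + real \<gamma> * real j)"
      using h e1 by simp
    also have "\<dots> = real \<delta> * (real i * real e + real j * real g)"
      using relr by (smt (verit) mult.commute mult.left_commute distrib_left)
    finally have "real \<delta> * (real \<gamma> * real e) < real \<delta> * (real i * real e + real j * real g)"
      by (simp only: mult_ac)
    then show ?thesis using d1 by (simp add: mult_less_cancel_left_pos)
  qed
  have nz: "\<exists>i j. q i j \<noteq> 0 \<and> mul2 (pow2 (lift P) i) (pow2 R j) a b \<noteq> 0"
    if "comp2 q P R a b \<noteq> 0" for a b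
  proof -
    from that obtain i where "(\<Sum>j\<le>a + b - i. q i j * mul2 (pow2 (lift P) i) (pow2 R j) a b) \<noteq> 0"
      unfolding comp2_def by (meson sum.not_neutral_contains_not_neutral)
    then obtain j where "q i j * mul2 (pow2 (lift P) i) (pow2 R j) a b \<noteq> 0"
      by (meson sum.not_neutral_contains_not_neutral)
    then show ?thesis by auto
  qed
  have eq\<gamma>: "real (\<gamma> * e) = real \<gamma> * real e" by simp
  show C1: "\<forall>a b. comp2 q P R a b \<noteq> 0 \<longrightarrow> real (\<gamma> * e) \<le> real a + l * real b"
  proof (intro allI impI)
    fix a b assume "comp2 q P R a b \<noteq> 0"
    then obtain i j where ij: "q i j \<noteq> 0" "mul2 (pow2 (lift P) i) (pow2 R j) a b \<noteq> 0" using nz by blast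
    show "real (\<gamma> * e) \<le> real a + l * real b"
    proof (cases "(i, j) = (\<gamma>, 0)")
      case True
      then show ?thesis using key[OF ij(2)] by auto
    next
      case False
      then show ?thesis using key[OF ij(2)] ineq[OF ij(1) False] by linarith
    qed
  qed
  show "\<forall>a b. comp2 q P R a b \<noteq> 0 \<longrightarrow> b \<ge> 1 \<longrightarrow> real (\<gamma> * e) < real a + l * real b"
  proof (intro allI impI)
    fix a b assume "comp2 q P R a b \<noteq> 0" "b \<ge> 1"
    then obtain i j where ij: "q i j \<noteq> 0" "mul2 (pow2 (lift P) i) (pow2 R j) a b \<noteq> 0" using nz by blast
    show "real (\<gamma> * e) < real a + l * real b"
    proof (cases "(i, j) = (\<gamma>, 0)")
      case True
      have L0: "\<forall>x y. lift P x y \<noteq> 0 \<longrightarrow> (0::real) \<le> 0 * real x + (-1) * real y"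
        by (simp add: lift_def)
      have A: "\<forall>x y. pow2 (lift P) i x y \<noteq> 0 \<longrightarrow> real i * 0 \<le> 0 * real x + (-1) * real y"
        using W_pow[OF L0, of i] by blast
      have B: "\<forall>x y. pow2 R j x y \<noteq> 0 \<longrightarrow> 0 \<le> 0 * real x + (-1) * real y"
      proof (intro allI impI)
        fix x y assume xy: "pow2 R j x y \<noteq> 0"
        have "j = 0" using True by simp
        then have "pow2 R 0 x y \<noteq> 0" using xy by (metis)
        then have "x = 0 \<and> y = 0" by (rule pow2_0_supp)
        then show "0 \<le> 0 * real x + (-1) * real y" by simp
      qed
      have "real i * 0 + 0 \<le> 0 * real a + (-1) * real b" using W_mul[OF A B ij(2)] .
      then show ?thesis using \<open>b \<ge> 1\<close> by simp
    next
      case False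
      then show ?thesis using key[OF ij(2)] ineq[OF ij(1) False] by linarith
    qed
  qed
  have "comp2 q P R (\<gamma> * e) 0 = (\<Sum>i\<le>\<gamma> * e + 0. if i = \<gamma> then (\<Sum>j\<le>\<gamma> * e + 0 - i. if j = 0 then q \<gamma> 0 * (P e)^\<gamma> else 0) else 0)"
    unfolding comp2_def
  proof (intro sum.cong refl)
    fix i assume i: "i \<in> {..\<gamma> * e + 0}"
    have trm: "q i j * mul2 (pow2 (lift P) i) (pow2 R j) (\<gamma> * e) 0 = (if i = \<gamma> \<and> j = 0 then q \<gamma> 0 * (P e)^\<gamma> else 0)" for j
    proof (cases "(i, j) = (\<gamma>, 0)")
      case True
      then have "q i j * mul2 (pow2 (lift P) i) (pow2 R j) (\<gamma> * e) 0 = q \<gamma> 0 * lift (pow1 P \<gamma>) (\<gamma> * e) 0"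
        by (simp add: mul2_unit' pow2_lift)
      also have "\<dots> = q \<gamma> 0 * (P e)^\<gamma>"
        using pow1_order[OF Plow, of \<gamma>] by (simp add: lift_def mult.commute)
      finally show ?thesis using True by simp
    next
      case False
      have "q i j * mul2 (pow2 (lift P) i) (pow2 R j) (\<gamma> * e) 0 = 0"
      proof (rule ccontr)
        assume "q i j * mul2 (pow2 (lift P) i) (pow2 R j) (\<gamma> * e) 0 \<noteq> 0"
        then have "q i j \<noteq> 0" "mul2 (pow2 (lift P) i) (pow2 R j) (\<gamma> * e) 0 \<noteq> 0" by auto
        from key[OF this(2)] ineq[OF this(1) False] show False by simp
      qed
      then show ?thesis using False by auto
    qed
    show "(\<Sum>j\<le>\<gamma> * e + 0 - i. q i j * mul2 (pow2 (lift P) i) (pow2 R j) (\<gamma> * e) 0) =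
          (if i = \<gamma> then (\<Sum>j\<le>\<gamma> * e + 0 - i. if j = 0 then q \<gamma> 0 * (P e)^\<gamma> else 0) else 0)"
      by (simp add: trm)
  qed
  also have "\<dots> = q \<gamma> 0 * (P e)^\<gamma>" using e1 by simp
  finally show "comp2 q P R (\<gamma> * e) 0 \<noteq> 0" using qg Pe by simp
qed



definition USet :: "ser2 \<Rightarrow> (real \<times> real) set" where
  "USet g = \<Union>{ {(x, y). real i \<le> x \<and> real j \<le> y} | i j. g i j \<noteq> 0}"

lemma newton_eq: "newton g = convex hull (USet g)"
  by (simp add: newton_def USet_def)

lemma USet_iff: "s \<in> USet g \<longleftrightarrow> (\<exists>i j. g i j \<noteq> 0 \<and> real i \<le> fst s \<and> real j \<le> snd s)"
  by (cases s) (auto simp: USet_def)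

lemma newton_U: "g i j \<noteq> 0 \<Longrightarrow> real i \<le> x \<Longrightarrow> real j \<le> y \<Longrightarrow> (x, y) \<in> newton g"
  unfolding newton_eq by (rule hull_inc) (auto simp: USet_iff)

lemma USet_sub: "USet g \<subseteq> newton g"
  unfolding newton_eq by (rule hull_subset)

lemma newton_UC:
  assumes "u \<in> newton g" "0 \<le> e1" "0 \<le> e2"
  shows "u + (e1, e2) \<in> newton g"
proof -
  let ?T = "{u. u + (e1, e2) \<in> newton g}"
  have "convex ?T"
  proof (rule convexI)
    fix x y :: "real \<times> real" and u v :: real
    assume "x \<in> ?T" "y \<in> ?T" "0 \<le> u" "0 \<le> v" "u + v = 1"
    then have "u *\<^sub>R (x + (e1, e2)) + v *\<^sub>R (y + (e1, e2)) \<in> newton g"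
      unfolding newton_eq by (intro convexD) (auto intro: convex_convex_hull simp: newton_eq)
    moreover have "u *\<^sub>R (x + (e1, e2)) + v *\<^sub>R (y + (e1, e2)) = (u *\<^sub>R x + v *\<^sub>R y) + (e1, e2)"
    proof -
      from \<open>u + v = 1\<close> have v: "v = 1 - u" by simp
      show ?thesis by (simp add: v algebra_simps)
    qed
    ultimately show "u *\<^sub>R x + v *\<^sub>R y \<in> ?T" by simp
  qed
  moreover have "USet g \<subseteq> ?T"
  proof
    fix s assume "s \<in> USet g"
    then obtain i j where "g i j \<noteq> 0" "real i \<le> fst s" "real j \<le> snd s" by (auto simp: USet_iff)
    then have "(fst s + e1, snd s + e2) \<in> newton g" using assms by (intro newton_U) auto
    then show "s \<in> ?T" by (cases s) simp
  qed
  ultimately have "newton g \<subseteq> ?T" unfolding newton_eq by (rule hull_minimal[rotated])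
  then show ?thesis using assms(1) by blast
qed

lemma ext_def2: "v extreme_point_of newton g \<Longrightarrow> a \<in> newton g \<Longrightarrow> b \<in> newton g \<Longrightarrow> v \<notin> open_segment a b"
  by (simp add: extreme_point_of_def)

lemma newton_ext_supp:
  assumes "v extreme_point_of newton g"
  shows "\<exists>i j. v = (real i, real j) \<and> g i j \<noteq> 0"
proof -
  have "v \<in> USet g"
    using extreme_point_of_convex_hull assms unfolding newton_eq by blast
  then obtain i j where ij: "g i j \<noteq> 0" "real i \<le> fst v" "real j \<le> snd v" by (auto simp: USet_iff)
  have "fst v = real i"
  proof (rule ccontr)
    assume "fst v \<noteq> real i"
    define a where "a = (real i, snd v)"
    define b where "b = (2 * fst v - real i, snd v)"
    have "a \<in> newton g" "b \<in> newton g" unfolding a_def b_def using ij by (auto intro!: newton_U)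
    moreover have "a \<noteq> b" using \<open>fst v \<noteq> real i\<close> by (simp add: a_def b_def)
    moreover have "v = midpoint a b" by (simp add: a_def b_def midpoint_def prod_eq_iff)
    ultimately show False using ext_def2[OF assms] midpoint_in_open_segment by metis
  qed
  moreover have "snd v = real j"
  proof (rule ccontr)
    assume "snd v \<noteq> real j"
    define a where "a = (fst v, real j)"
    define b where "b = (fst v, 2 * snd v - real j)"
    have "a \<in> newton g" "b \<in> newton g" unfolding a_def b_def using ij by (auto intro!: newton_U)
    moreover have "a \<noteq> b" using \<open>snd v \<noteq> real j\<close> by (simp add: a_def b_def)
    moreover have "v = midpoint a b" by (simp add: a_def b_def midpoint_def prod_eq_iff)
    ultimately show False using ext_def2[OF assms] midpoint_in_open_segment by metis
  qed
  ultimately show ?thesis using ij(1) by (metis prod.collapse)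
qed

lemma not_ext_vert:
  assumes "(x, y') \<in> newton g" "y' < y"
  shows "\<not> (x, y) extreme_point_of newton g"
proof
  assume ext: "(x, y) extreme_point_of newton g"
  have "(x, y' + 2 * (y - y')) \<in> newton g" using newton_UC[OF assms(1), of 0 "2 * (y - y')"] assms(2) by simp
  moreover have "y' + 2 * (y - y') = 2 * y - y'" by simp
  ultimately have b: "(x, 2 * y - y') \<in> newton g" by simp
  have "(x, y) = midpoint (x, y') (x, 2 * y - y')" by (simp add: midpoint_def)
  moreover have "(x, y') \<noteq> (x, 2 * y - y')" using assms(2) by simp
  ultimately show False using ext_def2[OF ext assms(1) b] midpoint_in_open_segment by metis
qed

lemma conv_eq_helper:
  fixes u X Y c :: real
  assumes "0 \<le> u" "u \<le> 1" "c \<le> X" "c \<le> Y" "(1 - u) * X + u * Y \<le> c"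
  shows "(1 - u) * (X - c) = 0 \<and> u * (Y - c) = 0"
proof -
  have e: "(1 - u) * X + u * Y - c = (1 - u) * (X - c) + u * (Y - c)" by (simp add: algebra_simps)
  have "0 \<le> (1 - u) * (X - c)" "0 \<le> u * (Y - c)" using assms by auto
  then show ?thesis using e assms(5) by linarith
qed

lemma extreme_by_functional:
  fixes S :: "(real \<times> real) set" and A B c e :: real and p0 :: "real \<times> real"
  assumes B: "B \<noteq> 0" and e: "e \<noteq> 0"
    and ge: "\<And>s. s \<in> S \<Longrightarrow> c \<le> A * fst s + B * snd s"
    and eq: "\<And>s. s \<in> S \<Longrightarrow> A * fst s + B * snd s = c \<Longrightarrow> e * fst s \<le> e * fst p0"
    and p0: "p0 \<in> S" "A * fst p0 + B * snd p0 = c"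
  shows "p0 extreme_point_of convex hull S"
proof -
  define \<phi> where "\<phi> s = A * fst s + B * snd s" for s :: "real \<times> real"
  define E where "E = e * fst p0"
  define H where "H = {s. c < \<phi> s} \<union> {s. \<phi> s = c \<and> e * fst s \<le> E}"
  have Hge: "c \<le> \<phi> s" if "s \<in> H" for s using that by (auto simp: H_def)
  have lin: "\<phi> ((1 - u) *\<^sub>R x + u *\<^sub>R y) = (1 - u) * \<phi> x + u * \<phi> y" for u x y
    by (simp add: \<phi>_def algebra_simps)
  have fl: "e * fst ((1 - u) *\<^sub>R x + u *\<^sub>R y) = (1 - u) * (e * fst x) + u * (e * fst y)" for u x y
    by (simp add: algebra_simps)
  have "convex H" unfolding convex_alt
  proof (intro ballI allI impI)
    fix x y :: "real \<times> real" and u :: real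
    assume x: "x \<in> H" and y: "y \<in> H" and u: "0 \<le> u \<and> u \<le> 1"
    let ?z = "(1 - u) *\<^sub>R x + u *\<^sub>R y"
    show "?z \<in> H"
    proof (cases "c < \<phi> ?z")
      case True then show ?thesis by (simp add: H_def)
    next
      case False
      have cx: "c \<le> \<phi> x" and cy: "c \<le> \<phi> y" using Hge x y by auto
      have "(1 - u) * (\<phi> x - c) = 0 \<and> u * (\<phi> y - c) = 0"
        using conv_eq_helper[of u c "\<phi> x" "\<phi> y"] u cx cy False lin by auto
      then have h: "(1 - u) * (\<phi> x - c) = 0" "u * (\<phi> y - c) = 0" by auto
      have e1: "(1 - u) * \<phi> x = (1 - u) * c" using h(1) by (simp add: right_diff_distrib)
      have e2: "u * \<phi> y = u * c" using h(2) by (simp add: right_diff_distrib)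
      have "\<phi> ?z = (1 - u) * \<phi> x + u * \<phi> y" by (rule lin)
      also have "\<dots> = (1 - u) * c + u * c" by (simp only: e1 e2)
      also have "\<dots> = c" by (simp add: algebra_simps)
      finally have zc: "\<phi> ?z = c" .
      have X: "(1 - u) * (e * fst x) \<le> (1 - u) * E"
      proof (cases "u = 1")
        case True then show ?thesis by simp
      next
        case False
        then have "\<phi> x = c" using h(1) by simp
        then have "e * fst x \<le> E" using x by (auto simp: H_def)
        then show ?thesis using u by (simp add: mult_left_mono)
      qed
      have Y: "u * (e * fst y) \<le> u * E"
      proof (cases "u = 0")
        case True then show ?thesis by simp
      next
        case False
        then have "\<phi> y = c" using h(2) by simp
        then have "e * fst y \<le> E" using y by (auto simp: H_def)
        then show ?thesis using u by (simp add: mult_left_mono)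
      qed
      have "e * fst ?z \<le> E" using X Y fl[of u x y] by (simp add: algebra_simps)
      then show ?thesis using zc by (simp add: H_def)
    qed
  qed
  moreover have "S \<subseteq> H"
  proof
    fix s assume "s \<in> S"
    then show "s \<in> H" using ge[of s] eq[of s] by (auto simp: H_def \<phi>_def E_def)
  qed
  ultimately have hull: "convex hull S \<subseteq> H" by (rule hull_minimal[rotated])
  show ?thesis unfolding extreme_point_of_def
  proof (intro conjI ballI)
    show "p0 \<in> convex hull S" using p0(1) by (rule hull_inc)
  next
    fix a b assume a: "a \<in> convex hull S" and b: "b \<in> convex hull S"
    show "p0 \<notin> open_segment a b"
    proof
      assume "p0 \<in> open_segment a b"
      then obtain u where ab: "a \<noteq> b" and u: "0 < u" "u < 1" and pu: "p0 = (1 - u) *\<^sub>R a + u *\<^sub>R b"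
        by (auto simp: in_segment)
      have aH: "a \<in> H" and bH: "b \<in> H" using a b hull by auto
      have "\<phi> p0 = c" using p0(2) by (simp add: \<phi>_def)
      then have "(1 - u) * \<phi> a + u * \<phi> b = c" using pu lin by simp
      then have "(1 - u) * (\<phi> a - c) = 0 \<and> u * (\<phi> b - c) = 0"
        using conv_eq_helper[of u c "\<phi> a" "\<phi> b"] u Hge aH bH by auto
      then have pa: "\<phi> a = c" and pb: "\<phi> b = c" using u by auto
      then have ea: "e * fst a \<le> E" and eb: "e * fst b \<le> E" using aH bH by (auto simp: H_def)
      have "E = (1 - u) * (e * fst a) + u * (e * fst b)" using pu fl E_def by simp
      moreover have "(1 - u) * (- (e * fst a)) + u * (- (e * fst b)) = - ((1 - u) * (e * fst a) + u * (e * fst b))"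
        by (simp add: algebra_simps)
      ultimately have c1: "(1 - u) * (- (e * fst a)) + u * (- (e * fst b)) \<le> - E" by linarith
      have c2: "- E \<le> - (e * fst a)" "- E \<le> - (e * fst b)" using ea eb by auto
      have "(1 - u) * (- (e * fst a) - - E) = 0 \<and> u * (- (e * fst b) - - E) = 0"
        using conv_eq_helper[OF less_imp_le[OF u(1)] less_imp_le[OF u(2)] c2 c1] .
      then have "e * fst a = E" "e * fst b = E" using u by auto
      then have fa: "fst a = fst b" using e by (metis mult_left_cancel)
      have "A * fst b + B * snd a = c" "A * fst b + B * snd b = c" using pa pb fa unfolding \<phi>_def by simp_all
      then have "B * snd a = B * snd b" by linarith
      then have "snd a = snd b" using B by simp
      then have "a = b" using fa by (simp add: prod_eq_iff)
      then show False using ab by simp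
    qed
  qed
qed



lemma vert_iff: "v \<in> newton_vertices g \<longleftrightarrow> v extreme_point_of newton g"
  by (simp add: newton_vertices_def)

lemma newton_mem_ext: "v extreme_point_of newton g \<Longrightarrow> v \<in> newton g"
  by (simp add: extreme_point_of_def)

lemma convex_newton: "convex (newton g)"
  unfolding newton_eq by (rule convex_convex_hull)

lemma newton_lemma:
  fixes G :: ser2 and N :: nat and l :: real
  assumes l: "0 < l" and h1: "G N 0 \<noteq> 0" and h2: "\<And>a. G a 0 \<noteq> 0 \<Longrightarrow> N \<le> a"
    and h3: "\<And>a b. G a b \<noteq> 0 \<Longrightarrow> 1 \<le> b \<Longrightarrow> real N < real a + l * real b"
  shows "newton G = {(x, y). real N \<le> x \<and> 0 \<le> y} \<or>
         (\<exists>a b. (real N, 0) \<in> newton_vertices G \<and> (a, b) \<in> newton_vertices G \<and> a < real N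
           \<and> (\<forall>v\<in>newton_vertices G. fst v < real N \<longrightarrow> fst v \<le> a) \<and> - b / (real N - a) < - 1 / l)"
proof (cases "\<forall>i j. G i j \<noteq> 0 \<longrightarrow> N \<le> i")
  case True
  define Q0 where "Q0 = {p :: real \<times> real. real N \<le> fst p \<and> 0 \<le> snd p}"
  have Q0eq: "{(x, y). real N \<le> x \<and> 0 \<le> y} = Q0" by (auto simp: Q0_def)
  have cQ: "convex Q0"
  proof (rule convexI)
    fix x y :: "real \<times> real" and u v :: real
    assume x: "x \<in> Q0" and y: "y \<in> Q0" and u: "0 \<le> u" and v: "0 \<le> v" and uv: "u + v = 1"
    have "u * real N \<le> u * fst x" "v * real N \<le> v * fst y" "0 \<le> u * snd x" "0 \<le> v * snd y"
      using x y u v by (auto simp: Q0_def intro: mult_left_mono)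
    moreover have "u * real N + v * real N = real N" using uv by (metis distrib_right mult_1)
    ultimately show "u *\<^sub>R x + v *\<^sub>R y \<in> Q0" by (simp add: Q0_def)
  qed
  have "newton G \<subseteq> Q0"
    unfolding newton_eq
  proof (rule hull_minimal)
    show "USet G \<subseteq> Q0"
    proof
      fix s assume "s \<in> USet G"
      then obtain i j where "G i j \<noteq> 0" "real i \<le> fst s" "real j \<le> snd s" by (auto simp: USet_iff)
      then show "s \<in> Q0" using True unfolding Q0_def
        by (metis (mono_tags, lifting) mem_Collect_eq of_nat_0_le_iff of_nat_le_iff order_trans)
    qed
  qed (rule cQ)
  moreover have "Q0 \<subseteq> newton G"
  proof
    fix s assume "s \<in> Q0"
    then have "(fst s, snd s) \<in> newton G" using h1 by (intro newton_U) (auto simp: Q0_def)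
    then show "s \<in> newton G" by simp
  qed
  ultimately show ?thesis using Q0eq by blast
next
  case False
  then obtain i1 j1 where ij1: "G i1 j1 \<noteq> 0" "i1 < N" by (auto simp: not_le)
  define L :: nat where "L = fact N"
  define key where "key i j = j * (L div (N - i))" for i j :: nat
  have Lpos: "0 < real L" by (simp add: L_def)
  have keyr: "real (key i j) = real j * real L / real (N - i)" if "i < N" for i j
  proof -
    have "(N - i) dvd L" unfolding L_def using that by (intro dvd_fact) auto
    then show ?thesis by (simp add: key_def real_of_nat_div)
  qed
  define Pk where "Pk k \<longleftrightarrow> (\<exists>i j. G i j \<noteq> 0 \<and> i < N \<and> key i j = k)" for k
  define k0 where "k0 = (LEAST k. Pk k)"
  have Pk0: "Pk k0" unfolding k0_def by (rule LeastI[of _ "key i1 j1"]) (use ij1 in \<open>auto simp: Pk_def\<close>)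
  have k0le: "k0 \<le> key i j" if "G i j \<noteq> 0" "i < N" for i j
    unfolding k0_def by (rule Least_le) (use that in \<open>auto simp: Pk_def\<close>)
  define Pa where "Pa i \<longleftrightarrow> (\<exists>j. G i j \<noteq> 0 \<and> i < N \<and> key i j = k0)" for i
  define a0 where "a0 = (LEAST i. Pa i)"
  have "Pa a0" unfolding a0_def by (rule LeastI_ex) (use Pk0 in \<open>auto simp: Pk_def Pa_def\<close>)
  then obtain b0 where ab0: "G a0 b0 \<noteq> 0" "a0 < N" "key a0 b0 = k0" by (auto simp: Pa_def)
  have a0le: "a0 \<le> i" if "Pa i" for i unfolding a0_def by (rule Least_le) (rule that)
  have Na: "0 < real N - real a0" using ab0(2) by simp
  have F1: "real b0 * (real N - real i) \<le> real j * (real N - real a0)" if "G i j \<noteq> 0" "i < N" for i j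
  proof -
    have "real (key a0 b0) \<le> real (key i j)" using k0le[OF that] ab0(3) by simp
    then have "real b0 * real L / (real N - real a0) \<le> real j * real L / (real N - real i)"
      using keyr[OF ab0(2)] keyr[OF that(2)] ab0(2) that(2) by (simp add: of_nat_diff)
    then have "real b0 * real L * (real N - real i) \<le> real j * real L * (real N - real a0)"
      using Na that(2) by (simp add: field_simps)
    then have "real L * (real b0 * (real N - real i)) \<le> real L * (real j * (real N - real a0))"
      by (simp add: ac_simps)
    then show ?thesis using Lpos by simp
  qed
  have F2: "a0 \<le> i" if "G i j \<noteq> 0" "i < N" "real b0 * (real N - real i) = real j * (real N - real a0)" for i j
  proof -
    have "real b0 * real L / (real N - real a0) = real j * real L / (real N - real i)"
    proof -
      have "0 < real N - real i" using that(2) by simp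
      then show ?thesis using that(3) Na by (simp add: frac_eq_eq)
    qed
    then have "real (key a0 b0) = real (key i j)"
      using keyr[OF ab0(2)] keyr[OF that(2)] ab0(2) that(2) by (simp add: of_nat_diff)
    then have "key i j = k0" using ab0(3) by simp
    then show ?thesis using that(1,2) by (intro a0le) (auto simp: Pa_def)
  qed
  have b0: "1 \<le> b0"
  proof (rule ccontr)
    assume "\<not> 1 \<le> b0"
    then have "b0 = 0" by simp
    then show False using h2[of a0] ab0 by simp
  qed
  have ext1: "(real N, 0) extreme_point_of newton G"
    unfolding newton_eq
  proof (rule extreme_by_functional[where A=1 and B=l and c="real N" and e=1])
    show "l \<noteq> 0" using l by simp
    show "(1::real) \<noteq> 0" by simp
    show "(real N, 0) \<in> USet G" using h1 by (auto simp: USet_iff)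
    show "1 * fst (real N, 0::real) + l * snd (real N, 0::real) = real N" by simp
    fix s assume s: "s \<in> USet G"
    then obtain i j where ij: "G i j \<noteq> 0" "real i \<le> fst s" "real j \<le> snd s" by (auto simp: USet_iff)
    have lj: "l * real j \<le> l * snd s" using ij(3) l by simp
    have sj: "0 \<le> snd s" using ij(3) of_nat_0_le_iff order_trans by blast
    have "real N \<le> real i + l * real j"
    proof (cases "j = 0")
      case True then show ?thesis using h2[of i] ij(1) by simp
    next
      case False then show ?thesis using h3[of i j] ij(1) by simp
    qed
    then show "real N \<le> 1 * fst s + l * snd s" using ij(2) lj by simp
    assume "1 * fst s + l * snd s = real N"
    moreover have "0 \<le> l * snd s" using sj l by simp
    ultimately show "1 * fst s \<le> 1 * fst (real N, 0::real)" by simp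
  qed
  have ext2: "(real a0, real b0) extreme_point_of newton G"
    unfolding newton_eq
  proof (rule extreme_by_functional[where A="real b0" and B="real N - real a0" and c="real b0 * real N" and e="-1"])
    show "real N - real a0 \<noteq> 0" using Na by simp
    show "(-1::real) \<noteq> 0" by simp
    show "(real a0, real b0) \<in> USet G" using ab0 by (auto simp: USet_iff)
    show "real b0 * fst (real a0, real b0) + (real N - real a0) * snd (real a0, real b0) = real b0 * real N"
      by (simp add: algebra_simps)
    fix s assume s: "s \<in> USet G"
    then obtain i j where ij: "G i j \<noteq> 0" "real i \<le> fst s" "real j \<le> snd s" by (auto simp: USet_iff)
    have m1: "real b0 * real i \<le> real b0 * fst s" using ij(2) by (simp add: mult_left_mono)
    have m2: "(real N - real a0) * real j \<le> (real N - real a0) * snd s" using ij(3) Na by (simp add: mult_left_mono)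
    have base: "real b0 * real N \<le> real b0 * real i + (real N - real a0) * real j"
    proof (cases "i < N")
      case True
      then show ?thesis using F1[OF ij(1) True] by (simp add: algebra_simps)
    next
      case False
      then have "real b0 * real N \<le> real b0 * real i" by (simp add: mult_left_mono)
      moreover have "0 \<le> (real N - real a0) * real j" using Na by simp
      ultimately show ?thesis by linarith
    qed
    then show "real b0 * real N \<le> real b0 * fst s + (real N - real a0) * snd s" using m1 m2 by linarith
    assume eq: "real b0 * fst s + (real N - real a0) * snd s = real b0 * real N"
    have "a0 \<le> i"
    proof (cases "i < N")
      case True
      have "real b0 * real N = real b0 * real i + (real N - real a0) * real j" using base m1 m2 eq by linarith
      then have "real b0 * (real N - real i) = real j * (real N - real a0)" by (simp add: algebra_simps)
      then show ?thesis using F2[OF ij(1) True] by simp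
    next
      case False then show ?thesis using ab0(2) by simp
    qed
    then show "-1 * fst s \<le> -1 * fst (real a0, real b0)" using ij(2) by simp
  qed
  have order: "fst v \<le> real a0" if v: "v \<in> newton_vertices G" "fst v < real N" for v
  proof (rule ccontr)
    assume "\<not> fst v \<le> real a0"
    have ve: "v extreme_point_of newton G" using v(1) by (simp add: vert_iff)
    obtain i j where vij: "v = (real i, real j)" "G i j \<noteq> 0" using newton_ext_supp[OF ve] by blast
    have iN: "i < N" using v(2) vij by simp
    have ia: "real a0 < real i" using \<open>\<not> fst v \<le> real a0\<close> vij by simp
    define t where "t = (real i - real a0) / (real N - real a0)"
    have t0: "0 < t" and t1: "t < 1" using ia iN Na by (auto simp: t_def field_simps)
    define w where "w = (1 - t) *\<^sub>R (real a0, real b0) + t *\<^sub>R (real N, 0::real)"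
    have wn: "w \<in> newton G" unfolding w_def
      using convexD_alt[OF convex_newton newton_mem_ext[OF ext2] newton_mem_ext[OF ext1]] t0 t1 by simp
    have "fst w = real a0 + t * (real N - real a0)" by (simp add: w_def algebra_simps)
    also have "t * (real N - real a0) = real i - real a0" using Na by (simp add: t_def)
    finally have fw: "fst w = real i" by simp
    have sw: "snd w = real b0 * (real N - real i) / (real N - real a0)"
      using Na by (simp add: w_def t_def field_simps)
    have "snd w \<le> real j" using F1[OF vij(2) iN] Na by (simp add: sw field_simps)
    then show False
    proof (cases "snd w < real j")
      case True
      have "(real i, snd w) \<in> newton G" using wn fw by (metis prod.collapse)
      from not_ext_vert[OF this True] ve vij show False by simp
    next
      case False
      then have "snd w = real j" using \<open>snd w \<le> real j\<close> by simp
      then have "v = w" using fw vij by (simp add: prod_eq_iff)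
      moreover have "w \<in> open_segment (real a0, real b0) (real N, 0)"
        unfolding w_def in_segment using t0 t1 ab0(2) by auto
      ultimately show False
        using ext_def2[OF ve newton_mem_ext[OF ext2] newton_mem_ext[OF ext1]] by simp
    qed
  qed
  have slope: "- real b0 / (real N - real a0) < - 1 / l"
  proof -
    have "real N < real a0 + l * real b0" using h3[OF ab0(1) b0] .
    then have "real N - real a0 < l * real b0" by simp
    then have "1 / l < real b0 / (real N - real a0)" using l Na by (simp add: field_simps)
    then show ?thesis by simp
  qed
  have "a0 < N" using ab0(2) .
  then show ?thesis using ext1 ext2 order slope
    by (intro disjI2 exI[of _ "real a0"] exI[of _ "real b0"]) (auto simp: vert_iff)
qed



lemma m_pos:
  assumes lv: "(real \<gamma>, 0) \<in> newton_vertices q" and pv: "(real n', real m') \<in> newton_vertices q"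
    and lt: "n' < \<gamma>"
  shows "0 < m'"
proof (rule ccontr)
  assume "\<not> 0 < m'"
  then have m0: "m' = 0" by simp
  have a: "(real n', 0) \<in> newton q" using pv m0 by (simp add: vert_iff newton_mem_ext)
  have "(real n' + 2 * (real \<gamma> - real n'), 0) \<in> newton q"
    using newton_UC[OF a, of "2 * (real \<gamma> - real n')" 0] lt by simp
  moreover have "real n' + 2 * (real \<gamma> - real n') = 2 * real \<gamma> - real n'" by simp
  ultimately have b: "(2 * real \<gamma> - real n', 0) \<in> newton q" by simp
  have "(real \<gamma>, 0) = midpoint (real n', 0) (2 * real \<gamma> - real n', 0::real)" by (simp add: midpoint_def)
  moreover have "(real n', 0) \<noteq> (2 * real \<gamma> - real n', 0::real)" using lt by simp
  moreover have "(real \<gamma>, 0) extreme_point_of newton q" using lv by (simp add: vert_iff)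
  ultimately show False using ext_def2 a b midpoint_in_open_segment by metis
qed

lemma q_line:
  assumes lv: "(real \<gamma>, 0) \<in> newton_vertices q"
    and lm: "\<forall>v\<in>newton_vertices q. fst v \<le> real \<gamma>"
    and pv: "(real n', real m') \<in> newton_vertices q"
    and lt: "n' < \<gamma>"
    and pm: "\<forall>v\<in>newton_vertices q. fst v < real \<gamma> \<longrightarrow> fst v \<le> real n'"
  shows "\<forall>i j. q i j \<noteq> 0 \<longrightarrow> m' * \<gamma> \<le> m' * i + (\<gamma> - n') * j"
proof (rule ccontr)
  assume "\<not> ?thesis"
  then obtain i1 j1 where ij1: "q i1 j1 \<noteq> 0" "m' * i1 + (\<gamma> - n') * j1 < m' * \<gamma>" by (auto simp: not_le)
  define Lf where "Lf i j = m' * i + (\<gamma> - n') * j" for i j :: nat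
  have Lfr: "real (Lf i j) = real m' * real i + (real \<gamma> - real n') * real j" for i j
    using lt by (simp add: Lf_def of_nat_diff)
  have Bpos: "0 < real \<gamma> - real n'" using lt by simp
  define Pk where "Pk k \<longleftrightarrow> (\<exists>i j. q i j \<noteq> 0 \<and> Lf i j = k)" for k
  define k0 where "k0 = (LEAST k. Pk k)"
  have Pk0: "Pk k0" unfolding k0_def by (rule LeastI[of _ "Lf i1 j1"]) (use ij1 in \<open>auto simp: Pk_def\<close>)
  have k0le: "k0 \<le> Lf i j" if "q i j \<noteq> 0" for i j
    unfolding k0_def by (rule Least_le) (use that in \<open>auto simp: Pk_def\<close>)
  have k0lt: "k0 < m' * \<gamma>" using k0le[OF ij1(1)] ij1(2) by (simp add: Lf_def)
  define Pa where "Pa i \<longleftrightarrow> (\<exists>j. q i j \<noteq> 0 \<and> Lf i j = k0)" for i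
  define i0 where "i0 = (LEAST i. Pa i)"
  have "Pa i0" unfolding i0_def by (rule LeastI_ex) (use Pk0 in \<open>auto simp: Pk_def Pa_def\<close>)
  then obtain j0 where ij0: "q i0 j0 \<noteq> 0" "Lf i0 j0 = k0" by (auto simp: Pa_def)
  have i0le: "i0 \<le> i" if "Pa i" for i unfolding i0_def by (rule Least_le) (rule that)
  have ext: "(real i0, real j0) extreme_point_of newton q"
    unfolding newton_eq
  proof (rule extreme_by_functional[where A="real m'" and B="real \<gamma> - real n'" and c="real k0" and e="-1"])
    show "real \<gamma> - real n' \<noteq> 0" using Bpos by simp
    show "(-1::real) \<noteq> 0" by simp
    show "(real i0, real j0) \<in> USet q" using ij0 by (auto simp: USet_iff)
    show "real m' * fst (real i0, real j0) + (real \<gamma> - real n') * snd (real i0, real j0) = real k0"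
      using Lfr[of i0 j0] ij0(2) by simp
    fix s assume s: "s \<in> USet q"
    then obtain i j where ij: "q i j \<noteq> 0" "real i \<le> fst s" "real j \<le> snd s" by (auto simp: USet_iff)
    have m1: "real m' * real i \<le> real m' * fst s" using ij(2) by (simp add: mult_left_mono)
    have m2: "(real \<gamma> - real n') * real j \<le> (real \<gamma> - real n') * snd s" using ij(3) Bpos by (simp add: mult_left_mono)
    have base: "real k0 \<le> real (Lf i j)" using k0le[OF ij(1)] by simp
    then show "real k0 \<le> real m' * fst s + (real \<gamma> - real n') * snd s" using m1 m2 Lfr[of i j] by linarith
    assume eq: "real m' * fst s + (real \<gamma> - real n') * snd s = real k0"
    then have "real (Lf i j) = real k0" using base m1 m2 Lfr[of i j] by linarith
    then have "Pa i" using ij(1) by (auto simp: Pa_def)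
    then have "i0 \<le> i" by (rule i0le)
    then show "-1 * fst s \<le> -1 * fst (real i0, real j0)" using ij(2) by simp
  qed
  have v0: "(real i0, real j0) \<in> newton_vertices q" using ext by (simp add: vert_iff)
  consider "\<gamma> < i0" | "i0 = \<gamma>" | "n' < i0 \<and> i0 < \<gamma>" | "i0 \<le> n'" by linarith
  then show False
  proof cases
    case 1 then show ?thesis using lm v0 by fastforce
  next
    case 2 then show ?thesis using ij0(2) k0lt by (simp add: Lf_def)
  next
    case 3 then show ?thesis using pm v0 by fastforce
  next
    case 4
    have gi: "0 < real \<gamma> - real i0" using 4 lt by simp
    define t where "t = (real n' - real i0) / (real \<gamma> - real i0)"
    have t0: "0 \<le> t" and t1: "t \<le> 1" using 4 lt gi by (auto simp: t_def field_simps)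
    define w where "w = (1 - t) *\<^sub>R (real i0, real j0) + t *\<^sub>R (real \<gamma>, 0::real)"
    have wn: "w \<in> newton q" unfolding w_def
      using convexD_alt[OF convex_newton newton_mem_ext[OF ext] newton_mem_ext, of "(real \<gamma>, 0)"] t0 t1 lv
      by (simp add: vert_iff)
    have "fst w = real i0 + t * (real \<gamma> - real i0)" by (simp add: w_def algebra_simps)
    also have "t * (real \<gamma> - real i0) = real n' - real i0" using gi by (simp add: t_def)
    finally have fw: "fst w = real n'" by simp
    have sw: "snd w = (1 - t) * real j0" by (simp add: w_def)
    have omt: "1 - t = (real \<gamma> - real n') / (real \<gamma> - real i0)" using gi by (simp add: t_def field_simps)
    have "real m' * real i0 + (real \<gamma> - real n') * real j0 < real m' * real \<gamma>"
      using Lfr[of i0 j0] ij0(2) k0lt by (metis of_nat_less_iff of_nat_mult)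
    then have "(real \<gamma> - real n') * real j0 < real m' * (real \<gamma> - real i0)" by (simp add: algebra_simps)
    then have "snd w < real m'" using gi by (simp add: sw omt field_simps)
    moreover have "(real n', snd w) \<in> newton q" using wn fw by (metis prod.collapse)
    ultimately have "\<not> (real n', real m') extreme_point_of newton q" by (rule not_ext_vert[rotated])
    then show False using pv by (simp add: vert_iff)
  qed
qed

theorem mainTheorem6:
  fixes p :: ser1 and q :: ser2 and \<delta> \<gamma> d n' m' :: nat
  assumes p_conv: "convergent1 p"
    and q_conv: "convergent2 q"
    and p0: "p 0 = 0"
    and q00: "q 0 0 = 0"
    and q_nz: "\<exists>i j. q i j \<noteq> 0"
    and delta_ge: "\<delta> \<ge> 1"
    and delta_lead: "p \<delta> \<noteq> 0"
    and delta_low: "\<forall>k<\<delta>. p k = 0"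
    \<comment> \<open>(gamma, d) = (n_s, m_s): the vertex of N(q) with largest first coordinate\<close>
    and last_vertex: "(real \<gamma>, real d) \<in> newton_vertices q"
    and last_max: "\<forall>v\<in>newton_vertices q. fst v \<le> real \<gamma>"
    \<comment> \<open>(n', m') = (n_{s-1}, m_{s-1}); its existence means s > 1\<close>
    and prev_vertex: "(real n', real m') \<in> newton_vertices q"
    and prev_lt: "n' < \<gamma>"
    and prev_max: "\<forall>v\<in>newton_vertices q. fst v < real \<gamma> \<longrightarrow> fst v \<le> real n'"
    \<comment> \<open>Case 2 with strict inequality delta < T_{s-1}; d = 0\<close>
    and d0: "d = 0"
    and delta_lt_T: "real \<delta> < real m' + real n' * (real m' - real d) / (real \<gamma> - real n')"
  shows "(\<forall>n\<ge>1. Qiter p q n (\<gamma> * \<delta> ^ (n - 1)) 0 \<noteq> 0 \<and>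
            (\<forall>l\<in>{(real \<gamma> - real n') / (real m' - real d) .. real \<gamma> / (real \<delta> - real d)}.
               wl l (Qiter p q n) = real (\<gamma> * \<delta> ^ (n - 1))))
       \<and> (\<forall>n\<ge>2. newton (Qiter p q n) = {(x, y). real (\<gamma> * \<delta> ^ (n - 1)) \<le> x \<and> 0 \<le> y}
            \<or> (\<exists>a b. (real (\<gamma> * \<delta> ^ (n - 1)), 0) \<in> newton_vertices (Qiter p q n)
                 \<and> (a, b) \<in> newton_vertices (Qiter p q n)
                 \<and> a < real (\<gamma> * \<delta> ^ (n - 1))
                 \<and> (\<forall>v\<in>newton_vertices (Qiter p q n).
                      fst v < real (\<gamma> * \<delta> ^ (n - 1)) \<longrightarrow> fst v \<le> a)
                 \<and> - b / (real (\<gamma> * \<delta> ^ (n - 1)) - a)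
                     < - 1 / ((real \<gamma> - real n') / (real m' - real d))))"
proof -
  have lv: "(real \<gamma>, 0) \<in> newton_vertices q" using last_vertex d0 by simp
  have mpos: "0 < m'" by (rule m_pos[OF lv prev_vertex prev_lt])
  have line: "\<forall>i j. q i j \<noteq> 0 \<longrightarrow> m' * \<gamma> \<le> m' * i + (\<gamma> - n') * j"
    by (rule q_line[OF lv last_max prev_vertex prev_lt prev_max])
  define l1 where "l1 = (real \<gamma> - real n') / (real m' - real d)"
  have Bpos: "0 < real \<gamma> - real n'" using prev_lt by simp
  have mr: "0 < real m'" using mpos by simp
  have l1': "l1 = (real \<gamma> - real n') / real m'" using d0 by (simp add: l1_def)
  have l1pos: "0 < l1" using Bpos mr by (simp add: l1')
  have liner: "real m' * real \<gamma> \<le> real m' * real i + (real \<gamma> - real n') * real j" if "q i j \<noteq> 0" for i j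
  proof -
    have "m' * \<gamma> \<le> m' * i + (\<gamma> - n') * j" using line that by blast
    then have "real (m' * \<gamma>) \<le> real (m' * i + (\<gamma> - n') * j)" by (simp only: of_nat_le_iff)
    then show ?thesis using prev_lt by (simp add: of_nat_diff)
  qed
  have Q1: "q \<gamma> 0 \<noteq> 0"
  proof -
    obtain i j where "(real \<gamma>, 0::real) = (real i, real j)" "q i j \<noteq> 0"
      using newton_ext_supp lv by (metis vert_iff)
    then show ?thesis by simp
  qed
  have Q3: "real \<gamma> \<le> real i + l1 * real j" if "q i j \<noteq> 0" for i j
  proof -
    have "real m' * real \<gamma> \<le> real m' * real i + (real \<gamma> - real n') * real j" using liner[OF that] .
    moreover have "real m' * l1 = real \<gamma> - real n'" using mr by (simp add: l1')
    moreover have "real m' * (real i + l1 * real j) = real m' * real i + (real m' * l1) * real j"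
      by (simp add: algebra_simps)
    ultimately have "real m' * real \<gamma> \<le> real m' * (real i + l1 * real j)" by simp
    then show ?thesis using mr by simp
  qed
  have dT: "real \<delta> * (real \<gamma> - real n') < real m' * real \<gamma>"
  proof -
    have "real \<delta> < real m' + real n' * real m' / (real \<gamma> - real n')" using delta_lt_T d0 by simp
    then have "real \<delta> * (real \<gamma> - real n') < (real m' + real n' * real m' / (real \<gamma> - real n')) * (real \<gamma> - real n')"
      using Bpos by (simp add: mult_strict_right_mono)
    also have "\<dots> = real m' * real \<gamma>" using Bpos by (simp add: field_simps)
    finally show ?thesis .
  qed
  have gpos: "0 < real \<gamma>" using prev_lt by simp
  have d1: "1 \<le> real \<delta>" using delta_ge by simp
  have Q2: "\<forall>i j. q i j \<noteq> 0 \<longrightarrow> (i, j) \<noteq> (\<gamma>, 0) \<longrightarrow> real \<delta> * real \<gamma> < real \<delta> * real i + real \<gamma> * real j"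
  proof (intro allI impI)
    fix i j assume ij: "q i j \<noteq> 0" "(i, j) \<noteq> (\<gamma>, 0)"
    show "real \<delta> * real \<gamma> < real \<delta> * real i + real \<gamma> * real j"
    proof (cases "\<gamma> \<le> i")
      case True
      have a: "real \<delta> * real \<gamma> \<le> real \<delta> * real i" using True by (simp add: mult_left_mono)
      show ?thesis
      proof (cases "j = 0")
        case True
        then have "\<gamma> < i" using ij \<open>\<gamma> \<le> i\<close> by auto
        then have "real \<delta> * real \<gamma> < real \<delta> * real i" using d1 by simp
        then show ?thesis using True by simp
      next
        case False
        then have "0 < real \<gamma> * real j" using gpos by simp
        then show ?thesis using a by linarith
      qed
    next
      case False
      have gi: "0 < real \<gamma> - real i" using False by simp
      have h: "real m' * (real \<gamma> - real i) \<le> (real \<gamma> - real n') * real j" using liner[OF ij(1)] by (simp add: algebra_simps)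
      have "(real \<gamma> - real n') * (real \<delta> * (real \<gamma> - real i)) = (real \<delta> * (real \<gamma> - real n')) * (real \<gamma> - real i)"
        by (simp add: ac_simps)
      also have "\<dots> < (real m' * real \<gamma>) * (real \<gamma> - real i)" using dT gi by (simp add: mult_strict_right_mono)
      also have "\<dots> = real \<gamma> * (real m' * (real \<gamma> - real i))" by (simp add: ac_simps)
      also have "\<dots> \<le> real \<gamma> * ((real \<gamma> - real n') * real j)" using h gpos by (simp add: mult_left_mono)
      also have "\<dots> = (real \<gamma> - real n') * (real \<gamma> * real j)" by (simp add: ac_simps)
      finally have "real \<delta> * (real \<gamma> - real i) < real \<gamma> * real j" using Bpos by simp
      then show ?thesis by (simp add: algebra_simps)
    qed
  qed
  have piter: "(\<forall>a<\<delta>^k. piter p k a = 0) \<and> piter p k (\<delta>^k) \<noteq> 0" for k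
    using piter_order[OF delta_low delta_lead delta_ge] by blast
  have ind: "(\<forall>a b. Qiter p q (Suc k) a b \<noteq> 0 \<longrightarrow> real (\<gamma> * \<delta>^k) \<le> real a + l1 * real b)
      \<and> Qiter p q (Suc k) (\<gamma> * \<delta>^k) 0 \<noteq> 0
      \<and> (1 \<le> k \<longrightarrow> (\<forall>a b. Qiter p q (Suc k) a b \<noteq> 0 \<longrightarrow> 1 \<le> b \<longrightarrow> real (\<gamma> * \<delta>^k) < real a + l1 * real b))" for k
  proof (induction k)
    case 0
    show ?case unfolding Q1_eq using Q1 Q3 by simp
  next
    case (Suc k)
    have eqQ: "Qiter p q (Suc (Suc k)) = comp2 q (piter p (Suc k)) (Qiter p q (Suc k))" by simp
    have e1: "1 \<le> \<delta> ^ Suc k" using delta_ge by simp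
    have rel: "\<gamma> * \<delta> ^ Suc k = \<delta> * (\<gamma> * \<delta> ^ k)" by simp
    have Rs: "\<forall>a b. Qiter p q (Suc k) a b \<noteq> 0 \<longrightarrow> real (\<gamma> * \<delta>^k) \<le> real a + l1 * real b"
      using Suc.IH by blast
    note st = step[where q=q and \<gamma>=\<gamma> and \<delta>=\<delta> and P="piter p (Suc k)" and e="\<delta> ^ Suc k"
        and g="\<gamma> * \<delta>^k" and R="Qiter p q (Suc k)" and l=l1, OF Q2 Q1 _ _ e1 delta_ge rel Rs]
    have pl: "\<forall>a<\<delta> ^ Suc k. piter p (Suc k) a = 0" and pe: "piter p (Suc k) (\<delta> ^ Suc k) \<noteq> 0"
      using piter[of "Suc k"] by auto
    show ?case unfolding eqQ using st[OF pl pe] by simp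
  qed
  show ?thesis
  proof (intro conjI allI impI)
    fix n :: nat assume n1: "1 \<le> n"
    then obtain k where nk: "n = Suc k" using not0_implies_Suc by fastforce
    have I: "(\<forall>a b. Qiter p q n a b \<noteq> 0 \<longrightarrow> real (\<gamma> * \<delta>^(n-1)) \<le> real a + l1 * real b)"
      "Qiter p q n (\<gamma> * \<delta>^(n-1)) 0 \<noteq> 0" using ind[of k] nk by auto
    show "Qiter p q n (\<gamma> * \<delta> ^ (n - 1)) 0 \<noteq> 0" using I(2) .
    show "\<forall>l\<in>{(real \<gamma> - real n') / (real m' - real d)..real \<gamma> / (real \<delta> - real d)}.
            wl l (Qiter p q n) = real (\<gamma> * \<delta> ^ (n - 1))"
    proof
      fix l assume "l \<in> {(real \<gamma> - real n') / (real m' - real d)..real \<gamma> / (real \<delta> - real d)}"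
      then have ll: "l1 \<le> l" by (simp add: l1_def)
      show "wl l (Qiter p q n) = real (\<gamma> * \<delta> ^ (n - 1))"
        unfolding wl_def
      proof (rule cInf_eq_minimum)
        show "real (\<gamma> * \<delta> ^ (n - 1)) \<in> {real i + l * real j |i j. Qiter p q n i j \<noteq> 0}"
          using I(2) by force
        fix x assume "x \<in> {real i + l * real j |i j. Qiter p q n i j \<noteq> 0}"
        then obtain i j where x: "x = real i + l * real j" "Qiter p q n i j \<noteq> 0" by blast
        have "l1 * real j \<le> l * real j" using ll by (simp add: mult_right_mono)
        then show "real (\<gamma> * \<delta> ^ (n - 1)) \<le> x" using I(1) x by force
      qed
    qed
  next
    fix n :: nat assume n2: "2 \<le> n"
    then obtain k where nk: "n = Suc (Suc k)" by (metis add_2_eq_Suc le_Suc_ex)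
    define N where "N = \<gamma> * \<delta> ^ (n - 1)"
    have I: "\<forall>a b. Qiter p q n a b \<noteq> 0 \<longrightarrow> real N \<le> real a + l1 * real b"
      "Qiter p q n N 0 \<noteq> 0"
      "\<forall>a b. Qiter p q n a b \<noteq> 0 \<longrightarrow> 1 \<le> b \<longrightarrow> real N < real a + l1 * real b"
      using ind[of "Suc k"] nk by (auto simp: N_def)
    have h2: "N \<le> a" if "Qiter p q n a 0 \<noteq> 0" for a
      using I(1) that by force
    have h3: "real N < real a + l1 * real b" if "Qiter p q n a b \<noteq> 0" "1 \<le> b" for a b
      using I(3) that by blast
    have "newton (Qiter p q n) = {(x, y). real N \<le> x \<and> 0 \<le> y} \<or>
         (\<exists>a b. (real N, 0) \<in> newton_vertices (Qiter p q n) \<and> (a, b) \<in> newton_vertices (Qiter p q n) \<and> a < real N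
           \<and> (\<forall>v\<in>newton_vertices (Qiter p q n). fst v < real N \<longrightarrow> fst v \<le> a) \<and> - b / (real N - a) < - 1 / l1)"
      by (rule newton_lemma[where G="Qiter p q n" and N=N and l=l1, OF l1pos I(2) h2 h3])
    then show "newton (Qiter p q n) = {(x, y). real (\<gamma> * \<delta> ^ (n - 1)) \<le> x \<and> 0 \<le> y} \<or>
         (\<exists>a b. (real (\<gamma> * \<delta> ^ (n - 1)), 0) \<in> newton_vertices (Qiter p q n) \<and>
                (a, b) \<in> newton_vertices (Qiter p q n) \<and>
                a < real (\<gamma> * \<delta> ^ (n - 1)) \<and>
                (\<forall>v\<in>newton_vertices (Qiter p q n). fst v < real (\<gamma> * \<delta> ^ (n - 1)) \<longrightarrow> fst v \<le> a) \<and>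
                - b / (real (\<gamma> * \<delta> ^ (n - 1)) - a) < - 1 / ((real \<gamma> - real n') / (real m' - real d)))"
      unfolding N_def l1_def .
  qed
qed

end
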